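(* Let $N\ge2$ and let $W:[0,\infty)\to(0,\infty)$ be such that $x\mapsto W(|x|)$ is in $C^2(\mathbb{R}^N)$, $W$ is non-decreasing and log-convex. Let $F\in C^2[0,+\infty)$ satisfy $F(0)=0<F(r)$ for $r>0$ and $$F''+\frac{W'}{W}F'+(N-1)\frac{F'}{r}=(N-1)\frac{F}{r^2}\quad\text{on }(0,+\infty).$$ Then for all $r>0$, $$\Big((F')^2+\frac{N-1}{r^2}F^2\Big)'\le0\qquad\text{and}\qquad\Big(\frac{N-1}{r}F^2+2FF'+\frac{W'}{W}F^2\Big)'\ge0.$$
   Context: This $F$ is the radial profile of the first nontrivial Steklov eigenfunctions $u_i(x)=\frac{x_i}{|x|}F(|x|)$, $i=1,\dots,N$, of $\nabla\cdot(W(|x|)\nabla u)=0$ in a ball centered at the origin with $\partial u/\partial\nu=\gamma u$ on its boundary. *)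

theory Defs
  imports "HOL-Analysis.Analysis"
begin

definition C2_everywhere :: "('a::euclidean_space \<Rightarrow> real) \<Rightarrow> bool" where
  "C2_everywhere f \<longleftrightarrow>
     (\<exists>(D :: 'a \<Rightarrow> 'a \<Rightarrow>\<^sub>L real) (D2 :: 'a \<Rightarrow> 'a \<Rightarrow>\<^sub>L ('a \<Rightarrow>\<^sub>L real)).
        (\<forall>x. (f has_derivative blinfun_apply (D x)) (at x)) \<and>
        (\<forall>x. (D has_derivative blinfun_apply (D2 x)) (at x)) \<and>
        continuous_on UNIV D2)"

end

theory Submission
  imports Defs
begin
lemma W_derivs:
  assumes "C2_everywhere (\<lambda>x::'a::euclidean_space. W (norm x))"
  obtains W1 W2 where "\<And>t. t>0 \<Longrightarrow> (W has_real_derivative W1 t) (at t)"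
     "\<And>t. t>0 \<Longrightarrow> (W1 has_real_derivative W2 t) (at t)"
proof -
  obtain D :: "'a \<Rightarrow> 'a \<Rightarrow>\<^sub>L real" and D2 :: "'a \<Rightarrow> 'a \<Rightarrow>\<^sub>L ('a \<Rightarrow>\<^sub>L real)" where
    hD: "\<And>x. ((\<lambda>x. W (norm x)) has_derivative blinfun_apply (D x)) (at x)" and
    hD2: "\<And>x. (D has_derivative blinfun_apply (D2 x)) (at x)"
    using assms unfolding C2_everywhere_def by blast
  obtain e :: 'a where e: "e \<in> Basis" using nonempty_Basis by blast
  have ne: "norm e = 1" using e by simp
  define W1 where "W1 t = blinfun_apply (D (t *\<^sub>R e)) e" for t
  define W2 where "W2 t = blinfun_apply (blinfun_apply (D2 (t *\<^sub>R e)) e) e" for t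
  have lin: "((\<lambda>t::real. t *\<^sub>R e) has_derivative (\<lambda>h. h *\<^sub>R e)) (at t)" for t
    by (intro derivative_eq_intros) auto
  have g: "((\<lambda>t. W (norm (t *\<^sub>R e))) has_real_derivative W1 t) (at t)" for t
  proof -
    have "((\<lambda>x. W (norm x)) \<circ> (\<lambda>t. t *\<^sub>R e) has_derivative (blinfun_apply (D (t *\<^sub>R e)) \<circ> (\<lambda>h. h *\<^sub>R e))) (at t)"
      by (rule diff_chain_at[OF lin hD])
    moreover have "(blinfun_apply (D (t *\<^sub>R e)) \<circ> (\<lambda>h. h *\<^sub>R e)) = (*) (W1 t)"
      by (auto simp: W1_def blinfun.scaleR_right fun_eq_iff)
    ultimately show ?thesis by (simp add: has_field_derivative_def o_def)
  qed
  have g2: "(W1 has_real_derivative W2 t) (at t)" for t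
  proof -
    have "(D \<circ> (\<lambda>t. t *\<^sub>R e) has_derivative (blinfun_apply (D2 (t *\<^sub>R e)) \<circ> (\<lambda>h. h *\<^sub>R e))) (at t)"
      by (rule diff_chain_at[OF lin hD2])
    then have "((\<lambda>L. blinfun_apply L e) \<circ> (D \<circ> (\<lambda>t. t *\<^sub>R e)) has_derivative (\<lambda>L. blinfun_apply L e) \<circ> (blinfun_apply (D2 (t *\<^sub>R e)) \<circ> (\<lambda>h. h *\<^sub>R e))) (at t)"
      by (rule diff_chain_at[OF _ bounded_linear_imp_has_derivative]) (auto intro: bounded_linear_apply_blinfun)
    moreover have "(\<lambda>L. blinfun_apply L e) \<circ> (blinfun_apply (D2 (t *\<^sub>R e)) \<circ> (\<lambda>h. h *\<^sub>R e)) = (*) (W2 t)"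
      by (auto simp: W2_def blinfun.scaleR_right blinfun.scaleR_left fun_eq_iff)
    ultimately show ?thesis using W1_def[abs_def] by (simp add: has_field_derivative_def o_def)
  qed
  show ?thesis
  proof
    fix t :: real assume t: "t > 0"
    show "(W has_real_derivative W1 t) (at t)"
      by (rule has_field_derivative_transform_within_open[OF g[of t], where S="{0<..}"])
         (use t ne in auto)
    show "(W1 has_real_derivative W2 t) (at t)" by (rule g2)
  qed
qed

theorem lemma3p3:
  fixes N :: nat and W F F' F'' :: "real \<Rightarrow> real"
  assumes dim: "DIM('a::euclidean_space) = N"
    and N2: "N \<ge> 2"
    and Wpos: "\<And>r. r \<ge> 0 \<Longrightarrow> W r > 0"
    and WC2: "C2_everywhere (\<lambda>x::'a. W (norm x))"
    and Wmono: "mono_on {0..} W"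
    and Wlogconv: "convex_on {0..} (\<lambda>r. ln (W r))"
    and F1: "\<And>r. r \<ge> 0 \<Longrightarrow> (F has_real_derivative F' r) (at r within {0..})"
    and F2: "\<And>r. r \<ge> 0 \<Longrightarrow> (F' has_real_derivative F'' r) (at r within {0..})"
    and F2cont: "continuous_on {0..} F''"
    and F0: "F 0 = 0"
    and Fpos: "\<And>r. r > 0 \<Longrightarrow> F r > 0"
    and ode: "\<And>r. r > 0 \<Longrightarrow>
       F'' r + deriv W r / W r * F' r + (real N - 1) * F' r / r = (real N - 1) * F r / r\<^sup>2"
  shows "\<forall>r>0.
     (\<exists>D. ((\<lambda>s. (F' s)\<^sup>2 + (real N - 1) / s\<^sup>2 * (F s)\<^sup>2) has_real_derivative D) (at r) \<and> D \<le> 0) \<and>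
     (\<exists>D. ((\<lambda>s. (real N - 1) / s * (F s)\<^sup>2 + 2 * F s * F' s + deriv W s / W s * (F s)\<^sup>2)
            has_real_derivative D) (at r) \<and> D \<ge> 0)"
proof (intro allI impI)
  fix r :: real assume r: "r > 0"
  obtain W1 W2 where W1: "\<And>t. t>0 \<Longrightarrow> (W has_real_derivative W1 t) (at t)"
     and W2: "\<And>t. t>0 \<Longrightarrow> (W1 has_real_derivative W2 t) (at t)"
    using W_derivs[OF WC2] by blast
  have dW: "deriv W t = W1 t" if "t > 0" for t using W1[OF that] by (rule DERIV_imp_deriv)
  have atw: "at t within {0<..} = at t" if "t > 0" for t :: real
    using that by (intro at_within_open) auto
  have Fd: "(F has_real_derivative F' t) (at t)" if "t > 0" for t
  proof -
    have "(F has_real_derivative F' t) (at t within {0<..})"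
      by (rule has_field_derivative_subset[OF F1]) (use that in auto)
    then show ?thesis using atw[OF that] by simp
  qed
  have F'd: "(F' has_real_derivative F'' t) (at t)" if "t > 0" for t
  proof -
    have "(F' has_real_derivative F'' t) (at t within {0<..})"
      by (rule has_field_derivative_subset[OF F2]) (use that in auto)
    then show ?thesis using atw[OF that] by simp
  qed
  have W1nn: "W1 r \<ge> 0"
    by (rule mono_on_imp_deriv_nonneg[OF Wmono W1[OF r]]) (use r in auto)
  have Wr: "W r > 0" using Wpos r by auto
  define n where "n = real N - 1"
  have n1: "n \<ge> 1" using N2 unfolding n_def by auto
  define w where "w = W1 r / W r"
  have wnn: "w \<ge> 0" unfolding w_def using W1nn Wr by auto
  have odeR: "F'' r = n * F r / r\<^sup>2 - w * F' r - n * F' r / r"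
    using ode[OF r] dW[OF r] unfolding n_def w_def by (simp add: algebra_simps)
  have lnd: "((\<lambda>s. ln (W s)) has_real_derivative W1 c / W c) (at c within {0..})" if "c > 0" for c
  proof -
    have "((\<lambda>s. ln (W s)) has_real_derivative W1 c / W c) (at c)"
      using W1[OF that] Wpos[of c] that by (auto intro!: derivative_eq_intros)
    then show ?thesis by (rule has_field_derivative_at_within)
  qed
  have monoL: "mono_on {0<..} (\<lambda>s. W1 s / W s)"
  proof (rule mono_onI)
    fix x y :: real assume xy: "x \<in> {0<..}" "y \<in> {0<..}" "x \<le> y"
    show "W1 x / W x \<le> W1 y / W y"
    proof (cases "x = y")
      case False
      then have xy': "x < y" using xy by auto
      have c: "connected {0::real..}" by (simp add: is_interval_connected)
      have a1: "ln (W y) - ln (W x) \<ge> W1 x / W x * (y - x)"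
        by (rule convex_on_imp_above_tangent[OF Wlogconv c _ _ lnd]) (use xy in auto)
      have a2: "ln (W x) - ln (W y) \<ge> W1 y / W y * (x - y)"
        by (rule convex_on_imp_above_tangent[OF Wlogconv c _ _ lnd]) (use xy in auto)
      have "W1 x / W x * (y - x) \<le> W1 y / W y * (y - x)" using a1 a2
        by (smt (verit) minus_diff_eq mult_minus_right)
      then show ?thesis by (rule mult_right_le_imp_le) (use xy' in simp)
    qed simp
  qed
  define q where "q = (W2 r * W r - W1 r * W1 r) / (W r * W r)"
  have Ld: "((\<lambda>s. W1 s / W s) has_real_derivative q) (at r)"
    unfolding q_def using W1[OF r] W2[OF r] Wr
    by (auto intro!: derivative_eq_intros)
  have qnn: "q \<ge> 0"
    by (rule mono_on_imp_deriv_nonneg[OF monoL Ld]) (use r in \<open>simp add: interior_open\<close>)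
  show "(\<exists>D. ((\<lambda>s. (F' s)\<^sup>2 + (real N - 1) / s\<^sup>2 * (F s)\<^sup>2) has_real_derivative D) (at r) \<and> D \<le> 0) \<and>
     (\<exists>D. ((\<lambda>s. (real N - 1) / s * (F s)\<^sup>2 + 2 * F s * F' s + deriv W s / W s * (F s)\<^sup>2)
            has_real_derivative D) (at r) \<and> D \<ge> 0)"
  proof (intro conjI exI)
    let ?D1 = "2 * F' r * F'' r + n * (2 * F r * F' r / r\<^sup>2 - 2 * (F r)\<^sup>2 / r^3)"
    show "((\<lambda>s. (F' s)\<^sup>2 + (real N - 1) / s\<^sup>2 * (F s)\<^sup>2) has_real_derivative ?D1) (at r)"
      unfolding n_def
      using r apply (auto intro!: derivative_eq_intros Fd[OF r] F'd[OF r])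
      using r by (simp add: field_simps eval_nat_numeral)
    have "?D1 = - 2 * n / r * (F' r - F r / r)\<^sup>2 - 2 * w * (F' r)\<^sup>2"
      unfolding odeR using r by (simp add: field_simps eval_nat_numeral)
    also have "\<dots> \<le> 0"
    proof -
      have "0 \<le> 2 * n / r * (F' r - F r / r)\<^sup>2" using n1 r by simp
      moreover have "0 \<le> 2 * w * (F' r)\<^sup>2" using wnn by simp
      ultimately show ?thesis by linarith
    qed
    finally show "?D1 \<le> 0" .
    let ?D2 = "- n / r\<^sup>2 * (F r)\<^sup>2 + n / r * 2 * F r * F' r + 2 * F' r * F' r + 2 * F r * F'' r
               + q * (F r)\<^sup>2 + w * 2 * F r * F' r"
    have "((\<lambda>s. n / s * (F s)\<^sup>2 + 2 * F s * F' s + W1 s / W s * (F s)\<^sup>2)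
            has_real_derivative ?D2) (at r)"
      unfolding w_def
      using r Wr apply (auto intro!: derivative_eq_intros Fd[OF r] F'd[OF r] W1[OF r] W2[OF r])
      using r Wr by (simp add: q_def field_simps eval_nat_numeral)
    then show "((\<lambda>s. (real N - 1) / s * (F s)\<^sup>2 + 2 * F s * F' s + deriv W s / W s * (F s)\<^sup>2)
            has_real_derivative ?D2) (at r)"
      by (rule has_field_derivative_transform_within_open[where S="{0<..}"])
         (use r dW in \<open>auto simp: n_def\<close>)
    have "?D2 = n / r\<^sup>2 * (F r)\<^sup>2 + 2 * (F' r)\<^sup>2 + q * (F r)\<^sup>2"
      unfolding odeR using r by (simp add: field_simps eval_nat_numeral)
    also have "\<dots> \<ge> 0" using n1 r qnn by (auto intro!: add_nonneg_nonneg)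
    finally show "?D2 \<ge> 0" by simp
  qed
qed
end
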